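(* With the notation of the context, let $\rho\in C^2(D)$ be positive, $w$ a unit vector, and $C_r,C_b$ constants with $d_r,d_b>0$. If $f_r(t)=f_b(t)$ for some $t\in D$, then $\nu_\rho(t)=x(t)$ and $d_b(t)=d_r(t)$.
   Context: Let $D\subset\mathbb R^2$ be compact and convex with nonempty interior, $x:D\to S^2$ a smooth parametrization of a domain $\Omega=x(D)$ of the upper unit sphere, $n_b>n_r>1$, and $\Phi_\kappa(s)=s-\sqrt{\kappa^2-1+s^2}$. For positive $\rho\in C^2(D)$ let $\nu_\rho(t)$ be the outer unit normal (with $x(t)\cdot\nu_\rho(t)\ge0$) to the surface $\rho(t)x(t)$. For $c\in\{r,b\}$ and a constant $C_c$: $\lambda_c(t)=\Phi_{n_c}(x(t)\cdot\nu_\rho(t))$, $m_c(t)=\frac1{n_c}(x(t)-\lambda_c(t)\nu_\rho(t))$ (a unit vector), $d_c(t)=\dfrac{C_c-\rho(t)(1-w\cdot x(t))}{n_c-w\cdot m_c(t)}$, $f_c(t)=\rho(t)x(t)+d_c(t)m_c(t)$. *)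

theory Defs
  imports "HOL-Analysis.Analysis"
begin

unbundle cross3_syntax

fun Ck_on :: "nat \<Rightarrow> (real^2) set \<Rightarrow> (real^2 \<Rightarrow> 'b::real_normed_vector) \<Rightarrow> bool" where
  "Ck_on 0 U f = continuous_on U f"
| "Ck_on (Suc k) U f = ((\<forall>t\<in>U. f differentiable (at t)) \<and>
      (\<forall>v. Ck_on k U (\<lambda>t. frechet_derivative f (at t) v)))"

definition Ck_set :: "nat \<Rightarrow> (real^2) set \<Rightarrow> (real^2 \<Rightarrow> 'b::real_normed_vector) \<Rightarrow> bool" where
  "Ck_set k D f = (\<exists>U g. open U \<and> D \<subseteq> U \<and> (\<forall>t\<in>D. g t = f t) \<and> Ck_on k U g)"

definition smooth_set :: "(real^2) set \<Rightarrow> (real^2 \<Rightarrow> 'b::real_normed_vector) \<Rightarrow> bool" where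
  "smooth_set D f = (\<forall>k. Ck_set k D f)"

definition pd :: "(real^2) set \<Rightarrow> (real^2 \<Rightarrow> real^3) \<Rightarrow> 2 \<Rightarrow> real^2 \<Rightarrow> real^3" where
  "pd D f i t = frechet_derivative f (at t within D) (axis i 1)"

definition nu :: "(real^2) set \<Rightarrow> (real^2 \<Rightarrow> real) \<Rightarrow> (real^2 \<Rightarrow> real^3) \<Rightarrow> real^2 \<Rightarrow> real^3" where
  "nu D \<rho> x t =
     (let S = (\<lambda>s. \<rho> s *\<^sub>R x s);
          N = pd D S 1 t \<times> pd D S 2 t;
          n = (1 / norm N) *\<^sub>R N
      in if x t \<bullet> n \<ge> 0 then n else - n)"

definition Phi :: "real \<Rightarrow> real \<Rightarrow> real" where
  "Phi \<kappa> s = s - sqrt (\<kappa>\<^sup>2 - 1 + s\<^sup>2)"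

definition lam :: "(real^2) set \<Rightarrow> (real^2 \<Rightarrow> real) \<Rightarrow> (real^2 \<Rightarrow> real^3) \<Rightarrow> real \<Rightarrow> real^2 \<Rightarrow> real" where
  "lam D \<rho> x nc t = Phi nc (x t \<bullet> nu D \<rho> x t)"

definition mvec :: "(real^2) set \<Rightarrow> (real^2 \<Rightarrow> real) \<Rightarrow> (real^2 \<Rightarrow> real^3) \<Rightarrow> real \<Rightarrow> real^2 \<Rightarrow> real^3" where
  "mvec D \<rho> x nc t = (1 / nc) *\<^sub>R (x t - lam D \<rho> x nc t *\<^sub>R nu D \<rho> x t)"

definition dist_c :: "(real^2) set \<Rightarrow> (real^2 \<Rightarrow> real) \<Rightarrow> (real^2 \<Rightarrow> real^3) \<Rightarrow> real^3 \<Rightarrow> real \<Rightarrow> real \<Rightarrow> real^2 \<Rightarrow> real" where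
  "dist_c D \<rho> x w nc Cc t = (Cc - \<rho> t * (1 - w \<bullet> x t)) / (nc - w \<bullet> mvec D \<rho> x nc t)"

definition fmap :: "(real^2) set \<Rightarrow> (real^2 \<Rightarrow> real) \<Rightarrow> (real^2 \<Rightarrow> real^3) \<Rightarrow> real^3 \<Rightarrow> real \<Rightarrow> real \<Rightarrow> real^2 \<Rightarrow> real^3" where
  "fmap D \<rho> x w nc Cc t = \<rho> t *\<^sub>R x t + dist_c D \<rho> x w nc Cc t *\<^sub>R mvec D \<rho> x nc t"

end

theory Submission
  imports Defs
begin

lemma deriv_unique_convex:
  fixes f :: "'a::euclidean_space \<Rightarrow> 'b::real_normed_vector"
  assumes F: "(f has_derivative F) (at t within D)" and G: "(f has_derivative G) (at t within D)"
    and cD: "convex D" and t: "t \<in> D" and int: "interior D \<noteq> {}"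
  shows "F = G"
proof -
  define H where "H = (\<lambda>v. F v - G v)"
  have HD: "((\<lambda>y. f y - f y) has_derivative H) (at t within D)"
    unfolding H_def by (rule has_derivative_diff[OF F G])
  then have H0: "((\<lambda>y. 0::'b) has_derivative H) (at t within D)" by simp
  have blH: "bounded_linear H" using H0 by (simp add: has_derivative_def)
  interpret H: bounded_linear H by (rule blH)
  have lim: "((\<lambda>z. (1 / norm (z - t)) *\<^sub>R (0 - (0 + H (z - t)))) \<longlongrightarrow> 0) (at t within D)"
    using H0 by (simp add: has_derivative_within)
  have Hy: "H (y - t) = 0" if y: "y \<in> D" for y
  proof (cases "y = t")
    case True then show ?thesis by simp
  next
    case False
    define g where "g = (\<lambda>s::real. t + s *\<^sub>R (y - t))"
    have ev: "eventually (\<lambda>s. g s \<in> D \<and> g s \<noteq> t) (at_right 0)"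
    proof -
      have "eventually (\<lambda>s::real. s \<in> {0<..<1}) (at_right 0)"
        by (rule eventually_at_right_real) simp
      then show ?thesis
      proof eventually_elim
        case (elim s)
        have "g s = (1 - s) *\<^sub>R t + s *\<^sub>R y" by (simp add: g_def algebra_simps)
        then have "g s \<in> D" using cD t y elim by (simp add: convex_def)
        moreover have "g s \<noteq> t" using elim False by (simp add: g_def)
        ultimately show ?case by simp
      qed
    qed
    have gt: "(g \<longlongrightarrow> t) (at_right 0)"
      unfolding g_def by (auto intro!: tendsto_eq_intros)
    have flt: "filterlim g (at t within D) (at_right 0)"
      using ev gt by (simp add: filterlim_at)
    have c: "((\<lambda>s. (1 / norm (g s - t)) *\<^sub>R (0 - (0 + H (g s - t)))) \<longlongrightarrow> 0) (at_right 0)"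
      using filterlim_compose[OF lim flt] by (simp add: o_def)
    have e2: "eventually (\<lambda>s. (1 / norm (g s - t)) *\<^sub>R (0 - (0 + H (g s - t))) = - ((1 / norm (y - t)) *\<^sub>R H (y - t))) (at_right (0::real))"
      using eventually_at_right_less[of 0]
    proof -
      have "eventually (\<lambda>s::real. s > 0) (at_right 0)"
        by (simp add: eventually_at_right_less)
      then show ?thesis
      proof eventually_elim
        case (elim s)
        then show ?case by (simp add: g_def H.scaleR)
      qed
    qed
    have "((\<lambda>s. - ((1 / norm (y - t)) *\<^sub>R H (y - t))) \<longlongrightarrow> 0) (at_right (0::real))"
      using tendsto_cong[OF e2] c by simp
    then have "- ((1 / norm (y - t)) *\<^sub>R H (y - t)) = 0"
      by (simp add: tendsto_const_iff)
    then show ?thesis using False by simp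
  qed
  obtain c where c: "c \<in> interior D" using int by auto
  then obtain e where e: "e > 0" "ball c e \<subseteq> D" using interior_def mem_interior by blast
  have "H v = 0" for v
  proof -
    define k where "k = e / (2 * (norm v + 1))"
    have k: "k > 0" using e unfolding k_def by (intro divide_pos_pos) (auto intro: add_nonneg_pos)
    have "norm (k *\<^sub>R v) < e"
    proof -
      have "norm (k *\<^sub>R v) = k * norm v" using k by simp
      also have "\<dots> < k * (norm v + 1) " using k by simp
      also have "\<dots> = e / 2"
      proof -
        have "norm v + 1 > 0" by (simp add: add_nonneg_pos)
        then show ?thesis unfolding k_def by (simp add: field_simps)
      qed
      finally show ?thesis using e by simp
    qed
    then have "c + k *\<^sub>R v \<in> D" using e by (auto simp: dist_norm)
    moreover have "c \<in> D" using e by auto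
    ultimately have "H (c + k *\<^sub>R v - t) = 0" "H (c - t) = 0" using Hy by auto
    then have "k *\<^sub>R H v = 0"
      by (metis H.add H.scaleR add_diff_eq add.commute add_cancel_left_right diff_add_eq)
    then show ?thesis using k by simp
  qed
  then show ?thesis unfolding H_def by (auto simp: fun_eq_iff)
qed

lemma Ck_set_diff:
  assumes "Ck_set (Suc k) D f" "t \<in> D"
  shows "f differentiable (at t within D)"
proof -
  obtain U g where U: "open U" "D \<subseteq> U" "\<forall>s\<in>D. g s = f s" "Ck_on (Suc k) U g"
    using assms(1) unfolding Ck_set_def by blast
  then have "g differentiable (at t)" using assms(2) by auto
  then obtain g' where "(g has_derivative g') (at t)" by (auto simp: differentiable_def)
  then have "(g has_derivative g') (at t within D)" by (rule has_derivative_at_withinI)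
  then have "(f has_derivative g') (at t within D)"
    by (rule has_derivative_transform_within[where d=1]) (use assms(2) U(3) in auto)
  then show ?thesis by (auto simp: differentiable_def)
qed

lemma mnorm:
  fixes xv \<nu> :: "real^3"
  assumes "norm \<nu> = 1" "norm xv = 1" "nc > 1"
  shows "norm ((1/nc) *\<^sub>R (xv - Phi nc (xv \<bullet> \<nu>) *\<^sub>R \<nu>)) = 1"
proof -
  define s where "s = xv \<bullet> \<nu>"
  define q where "q = sqrt (nc\<^sup>2 - 1 + s\<^sup>2)"
  have pos: "nc\<^sup>2 - 1 + s\<^sup>2 \<ge> 0" using assms(3)
    by (smt (verit) one_less_power pos2 zero_le_power2)
  have q2: "q\<^sup>2 = nc\<^sup>2 - 1 + s\<^sup>2" using pos by (simp add: q_def)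
  define lm where "lm = Phi nc s"
  have l: "lm = s - q" by (simp add: lm_def Phi_def q_def)
  have xx: "xv \<bullet> xv = 1" using assms(2) by (simp add: norm_eq_1)
  have nn: "\<nu> \<bullet> \<nu> = 1" using assms(1) by (simp add: norm_eq_1)
  have "(norm (xv - lm *\<^sub>R \<nu>))\<^sup>2 = 1 - 2 * lm * s + lm\<^sup>2"
    unfolding power2_norm_eq_inner by (simp add: inner_diff_left inner_diff_right xx nn s_def
        inner_commute power2_eq_square algebra_simps)
  also have "\<dots> = nc\<^sup>2"
  proof -
    have "1 - 2 * (s - q) * s + (s - q)\<^sup>2 = 1 - s\<^sup>2 + q\<^sup>2" by (simp add: power2_diff algebra_simps power2_eq_square)
    then show ?thesis using q2 unfolding l by linarith
  qed
  finally have "(norm (xv - lm *\<^sub>R \<nu>))\<^sup>2 = nc\<^sup>2" .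
  then have "norm (xv - lm *\<^sub>R \<nu>) = nc" using assms(3)
    using power2_eq_iff_nonneg[of "norm (xv - lm *\<^sub>R \<nu>)" nc] by simp
  then show ?thesis using assms(3) by (simp add: lm_def s_def)
qed

theorem lemma5p1:
  fixes D :: "(real^2) set" and x :: "real^2 \<Rightarrow> real^3" and \<rho> :: "real^2 \<Rightarrow> real"
    and w :: "real^3" and n_r n_b C_r C_b :: real and t :: "real^2"
  assumes D: "compact D" "convex D" "interior D \<noteq> {}"
    and x_sphere: "\<forall>s\<in>D. norm (x s) = 1 \<and> x s $ 3 > 0"
    and x_smooth: "smooth_set D x"
    and x_inj: "inj_on x D"
    and x_regular: "\<forall>s\<in>D. inj (frechet_derivative x (at s within D))"
    and n: "n_b > n_r" "n_r > 1"
    and \<rho>_C2: "Ck_set 2 D \<rho>" and \<rho>_pos: "\<forall>s\<in>D. \<rho> s > 0"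
    and w: "norm w = 1"
    and d_pos: "\<forall>s\<in>D. dist_c D \<rho> x w n_r C_r s > 0 \<and> dist_c D \<rho> x w n_b C_b s > 0"
    and t: "t \<in> D"
    and eq: "fmap D \<rho> x w n_r C_r t = fmap D \<rho> x w n_b C_b t"
  shows "nu D \<rho> x t = x t \<and> dist_c D \<rho> x w n_b C_b t = dist_c D \<rho> x w n_r C_r t"
proof -
  have xdiff: "x differentiable (at t within D)"
    using x_smooth t unfolding smooth_set_def by (intro Ck_set_diff[of 0]) auto
  have rdiff: "\<rho> differentiable (at t within D)"
    using \<rho>_C2 t by (intro Ck_set_diff[of 1]) (simp add: numeral_2_eq_2)
  define Fx where "Fx = frechet_derivative x (at t within D)"
  define Fr where "Fr = frechet_derivative \<rho> (at t within D)"
  have hx: "(x has_derivative Fx) (at t within D)"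
    using xdiff frechet_derivative_works Fx_def by blast
  have hr: "(\<rho> has_derivative Fr) (at t within D)"
    using rdiff frechet_derivative_works Fr_def by blast
  interpret Fx: bounded_linear Fx using hx by (simp add: has_derivative_def)
  have injFx: "inj Fx" using x_regular t Fx_def by simp
  define S where "S = (\<lambda>s. \<rho> s *\<^sub>R x s)"
  have hS: "(S has_derivative (\<lambda>v. \<rho> t *\<^sub>R Fx v + Fr v *\<^sub>R x t)) (at t within D)"
    unfolding S_def by (rule has_derivative_scaleR[OF hr hx])
  have hS': "(S has_derivative frechet_derivative S (at t within D)) (at t within D)"
    using hS frechet_derivative_works differentiableI by blast
  have FS: "frechet_derivative S (at t within D) = (\<lambda>v. \<rho> t *\<^sub>R Fx v + Fr v *\<^sub>R x t)"
    using deriv_unique_convex[OF hS' hS D(2) t D(3)] .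
  have xt1: "norm (x t) = 1" using x_sphere t by simp
  have hxx: "((\<lambda>s. x s \<bullet> x s) has_derivative (\<lambda>v. x t \<bullet> Fx v + Fx v \<bullet> x t)) (at t within D)"
    by (rule has_derivative_inner[OF hx hx])
  have hxx1: "((\<lambda>s. 1::real) has_derivative (\<lambda>v. x t \<bullet> Fx v + Fx v \<bullet> x t)) (at t within D)"
    by (rule has_derivative_transform_within[OF hxx, where d=1]) (use t x_sphere in \<open>auto simp: norm_eq_1\<close>)
  have hc: "((\<lambda>s. 1::real) has_derivative (\<lambda>v. 0)) (at t within D)" by simp
  have "(\<lambda>v. x t \<bullet> Fx v + Fx v \<bullet> x t) = (\<lambda>v. 0)"
    using deriv_unique_convex[OF hxx1 hc D(2) t D(3)] .
  then have orth: "x t \<bullet> Fx v = 0" for v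
    by (metis (no_types, lifting) inner_commute mult_2 mult_eq_0_iff zero_neq_numeral)
  define a1 where "a1 = Fx (axis 1 1)"
  define a2 where "a2 = Fx (axis 2 1)"
  define Nv where "Nv = pd D S 1 t \<times> pd D S 2 t"
  have Nv: "Nv = (\<rho> t *\<^sub>R a1 + Fr (axis 1 1) *\<^sub>R x t) \<times> (\<rho> t *\<^sub>R a2 + Fr (axis 2 1) *\<^sub>R x t)"
    by (simp add: Nv_def pd_def FS a1_def a2_def)
  have xN: "x t \<bullet> Nv = (\<rho> t)\<^sup>2 * (x t \<bullet> (a1 \<times> a2))"
    unfolding Nv by (simp add: cross_add_left cross_add_right cross_mult_left cross_mult_right inner_add_right dot_cross_self power2_eq_square)
  have c0: "x t \<bullet> (a1 \<times> a2) \<noteq> 0"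
  proof
    assume h: "x t \<bullet> (a1 \<times> a2) = 0"
    have "x t \<times> (a1 \<times> a2) = 0" by (simp add: Lagrange orth a1_def a2_def)
    with h have "x t = 0 \<or> a1 \<times> a2 = 0" using norm_and_cross_eq_0 by blast
    then have "a1 \<times> a2 = 0" using xt1 by auto
    then have "a1 = 0 \<or> a2 = 0 \<or> (\<exists>c. a2 = c *\<^sub>R a1)" by (simp add: cross_eq_0 collinear_lemma)
    then show False
    proof (elim disjE exE)
      assume "a1 = 0"
      then have "Fx (axis 1 1) = Fx 0" by (simp add: a1_def)
      then have "(axis 1 1 :: real^2) = 0" using injD[OF injFx] by blast
      then show False by (simp add: axis_eq_0_iff)
    next
      assume "a2 = 0"
      then have "Fx (axis 2 1) = Fx 0" by (simp add: a2_def)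
      then have "(axis 2 1 :: real^2) = 0" using injD[OF injFx] by blast
      then show False by (simp add: axis_eq_0_iff)
    next
      fix c assume "a2 = c *\<^sub>R a1"
      then have "Fx (axis 2 1) = Fx (c *\<^sub>R axis 1 1)" by (simp add: a1_def a2_def Fx.scaleR)
      then have "(axis 2 1 :: real^2) = c *\<^sub>R axis 1 1" using injD[OF injFx] by blast
      then have "(axis 2 1 :: real^2) $ 2 = (c *\<^sub>R axis 1 1 :: real^2) $ 2" by simp
      then show False by (simp add: axis_def)
    qed
  qed
  have Nnz: "Nv \<noteq> 0" using xN c0 \<rho>_pos t by auto
  define nu0 where "nu0 = (1 / norm Nv) *\<^sub>R Nv"
  have nu0: "norm nu0 = 1" using Nnz by (simp add: nu0_def)
  have nuE: "nu D \<rho> x t = (if x t \<bullet> nu0 \<ge> 0 then nu0 else - nu0)"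
    by (simp add: nu_def Let_def nu0_def Nv_def S_def)
  define \<nu> where "\<nu> = nu D \<rho> x t"
  have nun: "norm \<nu> = 1" using nu0 by (simp add: \<nu>_def nuE)
  have xnu: "x t \<bullet> \<nu> \<ge> 0" by (simp add: \<nu>_def nuE)
  define mr where "mr = mvec D \<rho> x n_r t"
  define mb where "mb = mvec D \<rho> x n_b t"
  define lr where "lr = Phi n_r (x t \<bullet> \<nu>)"
  define lb where "lb = Phi n_b (x t \<bullet> \<nu>)"
  have mr: "mr = (1/n_r) *\<^sub>R (x t - lr *\<^sub>R \<nu>)"
    by (simp add: mr_def mvec_def lam_def lr_def \<nu>_def)
  have mb: "mb = (1/n_b) *\<^sub>R (x t - lb *\<^sub>R \<nu>)"
    by (simp add: mb_def mvec_def lam_def lb_def \<nu>_def)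
  have nmr: "norm mr = 1" unfolding mr lr_def using mnorm[OF nun xt1] n by simp
  have nmb: "norm mb = 1" unfolding mb lb_def using mnorm[OF nun xt1] n by simp
  define dr where "dr = dist_c D \<rho> x w n_r C_r t"
  define db where "db = dist_c D \<rho> x w n_b C_b t"
  have dpos: "dr > 0" "db > 0" using d_pos t by (auto simp: dr_def db_def)
  have e1: "dr *\<^sub>R mr = db *\<^sub>R mb"
    using eq by (simp add: fmap_def dr_def db_def mr_def mb_def)
  then have "norm (dr *\<^sub>R mr) = norm (db *\<^sub>R mb)" by simp
  then have drb: "dr = db" using nmr nmb dpos by simp
  then have "mr = mb" using e1 dpos by simp
  then have "(1/n_r) *\<^sub>R (x t - lr *\<^sub>R \<nu>) = (1/n_b) *\<^sub>R (x t - lb *\<^sub>R \<nu>)" using mr mb by simp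
  then have "(1/n_r - 1/n_b) *\<^sub>R x t = (lr/n_r - lb/n_b) *\<^sub>R \<nu>"
    by (simp add: algebra_simps scaleR_diff_left)
  moreover have al: "1/n_r - 1/n_b > 0" using n by (simp add: frac_less2)
  ultimately have xb: "x t = ((lr/n_r - lb/n_b) / (1/n_r - 1/n_b)) *\<^sub>R \<nu>"
    by (metis (no_types, lifting) divide_inverse less_irrefl scaleR_scaleR
        inverse_eq_divide mult.commute scaleR_left_imp_eq scaleR_one right_inverse)
  define \<beta> where "\<beta> = (lr/n_r - lb/n_b) / (1/n_r - 1/n_b)"
  have xb': "x t = \<beta> *\<^sub>R \<nu>" using xb \<beta>_def by simp
  have "\<bar>\<beta>\<bar> = 1" using xt1 nun xb' by simp
  moreover have "x t \<bullet> \<nu> = \<beta>" using xb' nun by (simp add: norm_eq_1)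
  ultimately have "\<beta> = 1" using xnu by linarith
  then have "\<nu> = x t" using xb' by simp
  then show ?thesis using drb by (simp add: \<nu>_def dr_def db_def)
qed
end
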